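(* Let $G$ be an undirected graph and $T\subseteq V(G)$ a set of terminals. Let $H$ be an edge-minimal 2-node-connected subgraph of $G$ with $T\subseteq V(H)$ (i.e., no proper subgraph of $H$ obtained by deleting edges is a 2-node-connected subgraph containing $T$). Then $H$ has an open ear decomposition $P_0,P_1,\dots,P_\ell$ such that (i) $P_0$ consists of a terminal, and every ear $P_i$, $i\in\{1,\dots,\ell\}$, contains a terminal as an internal node, i.e. $\mathrm{int}(P_i)\cap T\neq\emptyset$; and (ii) $|D_3(H)|\leq 2(|T|-2)$, where $D_3(H)$ is the set of nodes of degree at least $3$ in $H$.
   Context: A graph $H$ is 2-node-connected if $|V(H)|>2$ and $H-v$ is connected for every node $v$. An ear decomposition of a graph is a partition of its edge set into $P_0,P_1,\dots,P_\ell$ where $P_0$ is a trivial path with one node, and each $P_i$ ($i\geq1$) is either a path with both end nodes in $V_{i-1}=V(P_0)\cup\dots\cup V(P_{i-1})$ and no internal node in $V_{i-1}$ (an open ear), or a cycle with exactly one node in $V_{i-1}$ (a closed ear). $\mathrm{int}(P_i)=V(P_i)\setminus V_{i-1}$. The decomposition is open if all ears $P_2,\dots,P_\ell$ are open ($P_1$ is always closed). *)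

theory Defs
  imports Main
begin

definition graph :: "'a set \<Rightarrow> 'a set set \<Rightarrow> bool" where
  "graph V E \<longleftrightarrow> finite V \<and> (\<forall>e\<in>E. e \<subseteq> V \<and> card e = 2)"

definition subgraph :: "'a set \<Rightarrow> 'a set set \<Rightarrow> 'a set \<Rightarrow> 'a set set \<Rightarrow> bool" where
  "subgraph V' E' V E \<longleftrightarrow> V' \<subseteq> V \<and> E' \<subseteq> E \<and> (\<forall>e\<in>E'. e \<subseteq> V')"

definition adj :: "'a set \<Rightarrow> 'a set set \<Rightarrow> ('a \<times> 'a) set" where
  "adj V E = {(x, y). x \<in> V \<and> y \<in> V \<and> {x, y} \<in> E}"

definition connected_graph :: "'a set \<Rightarrow> 'a set set \<Rightarrow> bool" where
  "connected_graph V E \<longleftrightarrow> (\<forall>x\<in>V. \<forall>y\<in>V. (x, y) \<in> (adj V E)\<^sup>*)"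

definition two_node_connected :: "'a set \<Rightarrow> 'a set set \<Rightarrow> bool" where
  "two_node_connected V E \<longleftrightarrow>
     card V > 2 \<and> (\<forall>v\<in>V. connected_graph (V - {v}) {e\<in>E. v \<notin> e})"

definition degree :: "'a set set \<Rightarrow> 'a \<Rightarrow> nat" where
  "degree E v = card {e\<in>E. v \<in> e}"

text \<open>Ears are given as vertex sequences; the edges of an ear are the
consecutive pairs.\<close>

definition walk_edges :: "'a list \<Rightarrow> 'a set set" where
  "walk_edges xs = {{xs ! j, xs ! Suc j} | j. Suc j < length xs}"

text \<open>V_{i-1}: vertices of the ears P_0, ..., P_{i-1}.\<close>
definition ear_verts :: "'a list list \<Rightarrow> nat \<Rightarrow> 'a set" where
  "ear_verts Ps i = (\<Union>j<i. set (Ps ! j))"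

definition ear_int :: "'a list list \<Rightarrow> nat \<Rightarrow> 'a set" where
  "ear_int Ps i = set (Ps ! i) - ear_verts Ps i"

definition open_ear :: "'a set \<Rightarrow> 'a list \<Rightarrow> bool" where
  "open_ear W P \<longleftrightarrow> length P \<ge> 2 \<and> distinct P \<and> hd P \<in> W \<and> last P \<in> W
     \<and> set (butlast (tl P)) \<inter> W = {}"

text \<open>Closed ear: a cycle (at least 3 nodes, written with hd = last) with
exactly one node in W, namely its start node.\<close>
definition closed_ear :: "'a set \<Rightarrow> 'a list \<Rightarrow> bool" where
  "closed_ear W P \<longleftrightarrow> length P \<ge> 4 \<and> hd P = last P \<and> distinct (tl P)
     \<and> set P \<inter> W = {hd P}"

definition ear_decomposition :: "'a set \<Rightarrow> 'a set set \<Rightarrow> 'a list list \<Rightarrow> bool" where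
  "ear_decomposition V E Ps \<longleftrightarrow>
     Ps \<noteq> [] \<and> length (Ps ! 0) = 1
     \<and> (\<forall>i\<in>{1..<length Ps}. open_ear (ear_verts Ps i) (Ps ! i)
                                \<or> closed_ear (ear_verts Ps i) (Ps ! i))
     \<and> (\<forall>i<length Ps. \<forall>j<length Ps. i \<noteq> j \<longrightarrow> walk_edges (Ps ! i) \<inter> walk_edges (Ps ! j) = {})
     \<and> (\<Union>i<length Ps. walk_edges (Ps ! i)) = E
     \<and> (\<Union>i<length Ps. set (Ps ! i)) = V"

definition open_ear_decomposition :: "'a set \<Rightarrow> 'a set set \<Rightarrow> 'a list list \<Rightarrow> bool" where
  "open_ear_decomposition V E Ps \<longleftrightarrow>
     ear_decomposition V E Ps \<and> length Ps \<ge> 2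
     \<and> closed_ear (ear_verts Ps 1) (Ps ! 1)
     \<and> (\<forall>i\<in>{2..<length Ps}. open_ear (ear_verts Ps i) (Ps ! i))"

end

theory Submission
  imports Defs
begin

lemma we_Nil[simp]: "walk_edges [] = {}" by (simp add: walk_edges_def)
lemma we_single[simp]: "walk_edges [x] = {}" by (simp add: walk_edges_def)
lemma we_Cons2[simp]: "walk_edges (x # y # xs) = insert {x,y} (walk_edges (y#xs))"
proof (rule set_eqI, rule iffI)
  fix e assume "e \<in> walk_edges (x # y # xs)"
  then obtain j where j: "e = {(x#y#xs)!j, (x#y#xs)!Suc j}" "Suc j < length (x#y#xs)"
    by (auto simp: walk_edges_def)
  show "e \<in> insert {x,y} (walk_edges (y#xs))"
  proof (cases j)
    case 0 then show ?thesis using j by simp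
  next
    case (Suc k) then show ?thesis using j unfolding walk_edges_def by auto
  qed
next
  fix e assume "e \<in> insert {x,y} (walk_edges (y#xs))"
  then show "e \<in> walk_edges (x # y # xs)"
  proof
    assume "e = {x,y}" then show ?thesis unfolding walk_edges_def
      by (auto intro!: exI[of _ 0])
  next
    assume "e \<in> walk_edges (y#xs)"
    then obtain j where j: "e = {(y#xs)!j, (y#xs)!Suc j}" "Suc j < length (y#xs)"
      by (auto simp: walk_edges_def)
    then show ?thesis unfolding walk_edges_def by (auto intro!: exI[of _ "Suc j"])
  qed
qed

lemma we_Cons: "xs \<noteq> [] \<Longrightarrow> walk_edges (x # xs) = insert {x, hd xs} (walk_edges xs)"
  by (cases xs) auto

lemma we_append: "walk_edges (xs @ y # ys) = walk_edges (xs @ [y]) \<union> walk_edges (y # ys)"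
proof (induction xs)
  case Nil then show ?case by simp
next
  case (Cons a xs) then show ?case by (cases xs) auto
qed

lemma we_suffix: "walk_edges ys \<subseteq> walk_edges (xs @ ys)"
proof (induction xs)
  case Nil then show ?case by simp
next
  case (Cons a xs) then show ?case by (cases "xs @ ys") auto
qed

lemma we_snoc: "xs \<noteq> [] \<Longrightarrow> walk_edges (xs @ [x]) = insert {last xs, x} (walk_edges xs)"
proof (induction xs)
  case Nil then show ?case by simp
next
  case (Cons a xs) then show ?case by (cases xs) auto
qed

lemma we_prefix: "walk_edges xs \<subseteq> walk_edges (xs @ ys)"
proof (induction ys rule: rev_induct)
  case Nil then show ?case by simp
next
  case (snoc a ys) then show ?case
  proof (cases "xs @ ys = []")
    case True then show ?thesis by simp
  next
    case False
    have "walk_edges (xs @ ys @ [a]) = walk_edges ((xs @ ys) @ [a])" by simp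
    also have "\<dots> = insert {last (xs@ys), a} (walk_edges (xs @ ys))" using False by (rule we_snoc)
    finally show ?thesis using snoc by auto
  qed
qed

lemma we_rev[simp]: "walk_edges (rev xs) = walk_edges xs"
proof (induction xs)
  case Nil then show ?case by simp
next
  case (Cons a xs) show ?case
  proof (cases "xs = []")
    case True then show ?thesis by simp
  next
    case False
    have "walk_edges (rev (a#xs)) = walk_edges (rev xs @ [a])" by simp
    also have "\<dots> = insert {last (rev xs), a} (walk_edges (rev xs))" using False by (simp add: we_snoc)
    also have "\<dots> = insert {a, hd xs} (walk_edges xs)" using Cons False by (simp add: last_rev insert_commute)
    also have "\<dots> = walk_edges (a#xs)" using False by (simp add: we_Cons)
    finally show ?thesis .
  qed
qed

lemma we_subset_set: "e \<in> walk_edges P \<Longrightarrow> e \<subseteq> set P"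
  by (auto simp: walk_edges_def)

lemma we_butlast: "e \<in> walk_edges P \<Longrightarrow> e \<inter> set (butlast P) \<noteq> {}"
proof -
  assume "e \<in> walk_edges P"
  then obtain j where j: "e = {P!j, P!Suc j}" "Suc j < length P" by (auto simp: walk_edges_def)
  then have "butlast P ! j = P ! j" by (simp add: nth_butlast)
  moreover have "j < length (butlast P)" using j by simp
  ultimately have "P!j \<in> set (butlast P)" by (metis nth_mem)
  then show ?thesis using j by auto
qed

lemma we_finite: "finite (walk_edges P)"
proof -
  have "walk_edges P \<subseteq> (\<lambda>j. {P!j, P!Suc j}) ` {..<length P}" by (auto simp: walk_edges_def)
  then show ?thesis by (rule finite_subset) simp
qed

lemma hd_mid_last: assumes "length P \<ge> 2" shows "P = hd P # butlast (tl P) @ [last P]"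
proof (cases P)
  case Nil then show ?thesis using assms by simp
next
  case (Cons a list)
  then have "list \<noteq> []" using Cons assms by auto
  then show ?thesis using Cons by simp
qed

definition pth :: "'a set set \<Rightarrow> 'a set \<Rightarrow> 'a list \<Rightarrow> bool" where
  "pth E V P \<longleftrightarrow> P \<noteq> [] \<and> distinct P \<and> set P \<subseteq> V \<and> walk_edges P \<subseteq> E"

lemma adj_sym: "(x,y) \<in> adj V E \<Longrightarrow> (y,x) \<in> adj V E"
  by (auto simp: adj_def insert_commute)

lemma rtr_sym: "(x,y) \<in> (adj V E)\<^sup>* \<Longrightarrow> (y,x) \<in> (adj V E)\<^sup>*"
proof (induction rule: rtrancl_induct)
  case base then show ?case by simp
next
  case (step y z) then show ?case by (meson adj_sym converse_rtrancl_into_rtrancl)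
qed

lemma rtr_mono: "V \<subseteq> V' \<Longrightarrow> E \<subseteq> E' \<Longrightarrow> (x,y) \<in> (adj V E)\<^sup>* \<Longrightarrow> (x,y) \<in> (adj V' E')\<^sup>*"
proof -
  assume "V \<subseteq> V'" "E \<subseteq> E'"
  then have "adj V E \<subseteq> adj V' E'" by (auto simp: adj_def)
  then show "(x,y) \<in> (adj V E)\<^sup>* \<Longrightarrow> (x,y) \<in> (adj V' E')\<^sup>*" using rtrancl_mono by blast
qed

lemma walk_reach: "P \<noteq> [] \<Longrightarrow> walk_edges P \<subseteq> E \<Longrightarrow> set P \<subseteq> V \<Longrightarrow> x \<in> set P
   \<Longrightarrow> (x, last P) \<in> (adj V E)\<^sup>*"
proof (induction P arbitrary: x)
  case Nil then show ?case by simp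
next
  case (Cons a P)
  show ?case
  proof (cases "P = []")
    case True then show ?thesis using Cons by simp
  next
    case False
    then have ih: "\<And>z. z \<in> set P \<Longrightarrow> (z, last P) \<in> (adj V E)\<^sup>*"
      using Cons.IH Cons.prems by (simp add: we_Cons)
    show ?thesis
    proof (cases "x = a")
      case True
      have "(a, hd P) \<in> adj V E" using Cons.prems False by (auto simp: adj_def we_Cons)
      moreover have "(hd P, last P) \<in> (adj V E)\<^sup>*" using ih False by simp
      ultimately show ?thesis using True False by (simp add: converse_rtrancl_into_rtrancl)
    next
      case False2: False
      then show ?thesis using ih Cons.prems False by simp
    qed
  qed
qed

lemma walk_reach_hd: "P \<noteq> [] \<Longrightarrow> walk_edges P \<subseteq> E \<Longrightarrow> set P \<subseteq> V \<Longrightarrow> x \<in> set P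
   \<Longrightarrow> (x, hd P) \<in> (adj V E)\<^sup>*"
  using walk_reach[of "rev P" E V x] by (simp add: last_rev)

lemma conn_hub: "(\<And>x. x \<in> V \<Longrightarrow> (x,r) \<in> (adj V E)\<^sup>*) \<Longrightarrow> connected_graph V E"
  unfolding connected_graph_def by (meson rtr_sym rtrancl_trans)

lemma tnc_conn: assumes "two_node_connected V E" shows "connected_graph V E"
  unfolding connected_graph_def
proof (intro ballI)
  fix x y assume xy: "x \<in> V" "y \<in> V"
  have c: "card V > 2" using assms by (simp add: two_node_connected_def)
  then have fin: "finite V" by (intro card_ge_0_finite) simp
  have "card (V - {x,y}) \<ge> card V - card {x,y}" by (rule diff_card_le_card_Diff) simp
  moreover have "card {x,y} \<le> 2" by (simp add: card_insert_if)
  ultimately have "card (V - {x,y}) > 0" using c by linarith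
  then have "V - {x,y} \<noteq> {}" by (metis card.empty less_irrefl)
  then obtain w where w: "w \<in> V" "w \<noteq> x" "w \<noteq> y" by auto
  then have "connected_graph (V - {w}) {e\<in>E. w \<notin> e}" using assms by (simp add: two_node_connected_def)
  then have "(x,y) \<in> (adj (V - {w}) {e\<in>E. w \<notin> e})\<^sup>*" using xy w by (simp add: connected_graph_def)
  then show "(x,y) \<in> (adj V E)\<^sup>*" by (rule rtr_mono[rotated 2]) auto
qed

lemma reach_path:
  assumes "(x,y) \<in> (adj V E)\<^sup>*" "x \<in> V" "y \<in> S"
  shows "\<exists>P. pth E V P \<and> hd P = x \<and> last P \<in> S \<and> set (butlast P) \<inter> S = {}"
  using assms
proof (induction rule: converse_rtrancl_induct)
  case base then show ?case by (auto simp: pth_def intro!: exI[of _ "[y]"])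
next
  case (step x x')
  then have x'V: "x' \<in> V" and ex: "{x,x'} \<in> E" by (auto simp: adj_def)
  from step x'V obtain P' where P': "pth E V P'" "hd P' = x'" "last P' \<in> S" "set (butlast P') \<inter> S = {}" by blast
  show ?case
  proof (cases "x \<in> S")
    case True then show ?thesis using step by (auto simp: pth_def intro!: exI[of _ "[x]"])
  next
    case xS: False
    show ?thesis
    proof (cases "x \<in> set P'")
      case True
      then obtain P1 P2 where sp: "P' = P1 @ x # P2" by (meson split_list)
      have "pth E V (x # P2)" using P'(1) sp we_suffix[of "x#P2" P1] by (auto simp: pth_def)
      moreover have "last (x # P2) \<in> S" using P'(3) sp by simp
      moreover have "set (butlast (x # P2)) \<subseteq> set (butlast P')" using sp by (simp add: butlast_append)
      ultimately show ?thesis using P'(4) by (intro exI[of _ "x # P2"]) auto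
    next
      case False
      have "P' \<noteq> []" using P' by (simp add: pth_def)
      then have "pth E V (x # P')" using P'(1,2) False ex step(4) by (auto simp: pth_def we_Cons)
      moreover have "last (x # P') \<in> S" using P'(3) \<open>P' \<noteq> []\<close> by simp
      moreover have "set (butlast (x # P')) \<inter> S = {}" using P'(4) \<open>P' \<noteq> []\<close> xS by simp
      ultimately show ?thesis by (intro exI[of _ "x # P'"]) auto
    qed
  qed
qed

lemma pth_mono: "pth E V P \<Longrightarrow> E \<subseteq> E' \<Longrightarrow> V \<subseteq> V' \<Longrightarrow> pth E' V' P"
  by (auto simp: pth_def)

definition fan :: "'a set set \<Rightarrow> 'a set \<Rightarrow> 'a set \<Rightarrow> 'a \<Rightarrow> 'a list \<Rightarrow> 'a list \<Rightarrow> bool" where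
  "fan E V X t A B \<longleftrightarrow> pth E V A \<and> pth E V B \<and> hd A = t \<and> hd B = t \<and> last A \<in> X \<and> last B \<in> X
     \<and> last A \<noteq> last B \<and> set (butlast A) \<inter> X = {} \<and> set (butlast B) \<inter> X = {} \<and> set A \<inter> set B = {t}"

lemma fan_sym: "fan E V X t A B \<Longrightarrow> fan E V X t B A"
  unfolding fan_def by auto

lemma fan_base:
  assumes tnc: "two_node_connected V E" and e: "{t,x1} \<in> E" and t: "t \<in> V" "t \<notin> X"
    and x1: "x1 \<in> X" "x1 \<in> V" and x2: "x2 \<in> X" "x2 \<in> V" "x2 \<noteq> x1"
  shows "\<exists>A B. fan E V X t A B"
proof -
  have "connected_graph (V - {x1}) {e\<in>E. x1 \<notin> e}" using tnc x1 by (simp add: two_node_connected_def)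
  moreover have "t \<noteq> x1" using t x1 by auto
  ultimately have "(t, x2) \<in> (adj (V - {x1}) {e\<in>E. x1 \<notin> e})\<^sup>*" using t x2 by (simp add: connected_graph_def)
  from reach_path[OF this, of "X - {x1}"] obtain Q where
    Q: "pth {e\<in>E. x1 \<notin> e} (V - {x1}) Q" "hd Q = t" "last Q \<in> X - {x1}" "set (butlast Q) \<inter> (X - {x1}) = {}"
    using t x2 \<open>t \<noteq> x1\<close> by auto
  have x1Q: "x1 \<notin> set Q" using Q(1) by (auto simp: pth_def)
  have "set (butlast Q) \<subseteq> set Q" by (meson in_set_butlastD subsetI)
  then have bq: "set (butlast Q) \<inter> X = {}" using Q(4) x1Q by auto
  have "fan E V X t [t, x1] Q"
    unfolding fan_def using Q bq x1Q e t x1 \<open>t \<noteq> x1\<close> pth_mono[OF Q(1), of E V]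
    by (auto simp: pth_def)
  then show ?thesis by blast
qed

lemma set_butlast_sub: "set (butlast P) \<subseteq> set P" by (meson in_set_butlastD subsetI)

lemma step_inA:
  assumes f: "fan E V X y A B" and tA: "t \<in> set A" and ty: "t \<noteq> y" and e: "{t,y} \<in> E"
    and t: "t \<in> V" "t \<notin> X"
  shows "\<exists>A' B'. fan E V X t A' B'"
proof -
  obtain A1 A2 where sp: "A = A1 @ t # A2" using tA by (meson split_list)
  have dA: "distinct A" and pA: "pth E V A" and pB: "pth E V B" using f by (auto simp: fan_def pth_def)
  have "A1 \<noteq> []" using sp f ty by (cases A1) (auto simp: fan_def)
  then have yA1: "y \<in> set A1" using sp f by (cases A1) (auto simp: fan_def)
  then have yA2: "y \<notin> set A2" using dA sp by auto
  have tB: "t \<notin> set B" using f tA ty by (auto simp: fan_def)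
  have hB: "hd B = y" "B \<noteq> []" using f by (auto simp: fan_def pth_def)
  have p1: "pth E V (t # A2)" using pA sp we_suffix[of "t#A2" A1] by (auto simp: pth_def)
  have p2: "pth E V (t # B)" using pB tB hB e t by (auto simp: pth_def we_Cons)
  have l1: "last (t # A2) = last A" using sp by simp
  have l2: "last (t # B) = last B" using hB by simp
  have b1: "set (butlast (t # A2)) \<subseteq> set (butlast A)" using sp by (simp add: butlast_append)
  have b2: "set (butlast (t # B)) = insert t (set (butlast B))" using hB by simp
  have i: "set (t # A2) \<inter> set (t # B) = {t}"
  proof -
    have "set A2 \<inter> set B = {}"
    proof -
      have "set A2 \<inter> set B \<subseteq> set A \<inter> set B" using sp by auto
      then have "set A2 \<inter> set B \<subseteq> {y}" using f by (auto simp: fan_def)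
      then show ?thesis using yA2 by auto
    qed
    then show ?thesis by auto
  qed
  have "fan E V X t (t # A2) (t # B)"
    unfolding fan_def using p1 p2 l1 l2 b1 b2 i f t by (auto simp: fan_def)
  then show ?thesis by blast
qed

lemma step_hitA:
  assumes f: "fan E V X y A B" and tAB: "t \<notin> set A" "t \<notin> set B" and t: "t \<notin> X" "t \<in> V"
    and Q: "pth E V Q" "hd Q = t" "last Q = z" "z \<in> set A" "z \<noteq> y"
    and yQ: "y \<notin> set Q" and bQ: "set (butlast Q) \<inter> (set A \<union> set B \<union> X) = {}"
    and e: "{t,y} \<in> E"
  shows "\<exists>A' B'. fan E V X t A' B'"
proof -
  obtain A1 A2 where sp: "A = A1 @ z # A2" using Q(4) by (meson split_list)
  have dA: "distinct A" and pA: "pth E V A" and pB: "pth E V B" using f by (auto simp: fan_def pth_def)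
  have "A1 \<noteq> []" using sp f Q(5) by (cases A1) (auto simp: fan_def)
  then have yA1: "y \<in> set A1" using sp f by (cases A1) (auto simp: fan_def)
  then have yA2: "y \<notin> set A2" using dA sp by auto
  have zA2: "z \<notin> set A2" using dA sp by auto
  have tB: "t \<notin> set B" using tAB by simp
  have hB: "hd B = y" "B \<noteq> []" using f by (auto simp: fan_def pth_def)
  have "Q \<noteq> []" using Q by (auto simp: pth_def)
  define Qb where "Qb = butlast Q"
  have Qsp: "Q = Qb @ [z]" using \<open>Q \<noteq> []\<close> Q(3) Qb_def by (metis append_butlast_last_id)
  have "Qb \<noteq> []" using Qsp Q(2) Q(4) tAB by (cases Qb) auto
  have tQb: "t \<in> set Qb" using Qsp Q(2) \<open>Qb \<noteq> []\<close> by (cases Qb) auto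
  define A' where "A' = Qb @ z # A2"
  have dQ: "distinct Q" using Q(1) by (simp add: pth_def)
  have dA2: "distinct A2" using dA sp by simp
  have "set Qb \<inter> set A = {}" using bQ Qb_def by blast
  then have "set Qb \<inter> set A2 = {}" using sp by auto
  moreover have "distinct Qb" "z \<notin> set Qb" using dQ Qsp by auto
  ultimately have dA': "distinct A'" using dA2 zA2 by (simp add: A'_def)
  have wA': "walk_edges A' \<subseteq> E"
  proof -
    have "walk_edges A' = walk_edges Q \<union> walk_edges (z # A2)" using Qsp A'_def we_append by metis
    moreover have "walk_edges (z # A2) \<subseteq> walk_edges A" using sp we_suffix by metis
    ultimately show ?thesis using Q(1) pA by (auto simp: pth_def)
  qed
  have sA': "set A' \<subseteq> V" using Q(1) Qsp pA sp by (auto simp: pth_def A'_def)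
  have p1: "pth E V A'" using dA' wA' sA' by (auto simp: pth_def A'_def)
  have p2: "pth E V (t # B)" using pB tB hB e t by (auto simp: pth_def we_Cons)
  have l1: "last A' = last A" using sp A'_def by simp
  have l2: "last (t # B) = last B" using hB by simp
  have b1: "set (butlast A') \<subseteq> set Qb \<union> set (butlast A)" using sp A'_def by (auto simp: butlast_append)
  have b2: "set (butlast (t # B)) = insert t (set (butlast B))" using hB by simp
  have i: "set A' \<inter> set (t # B) = {t}"
  proof -
    have "set A2 \<inter> set B = {}"
    proof -
      have "set A2 \<inter> set B \<subseteq> set A \<inter> set B" using sp by auto
      then have "set A2 \<inter> set B \<subseteq> {y}" using f by (auto simp: fan_def)
      then show ?thesis using yA2 by auto
    qed
    moreover have "set Qb \<inter> set B = {}" using bQ Qb_def by auto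
    moreover have "z \<notin> set B" using f Q(4,5) by (auto simp: fan_def)
    moreover have "t \<notin> set A2" using tAB sp by auto
    moreover have "t \<noteq> z" using tAB Q(4) by auto
    ultimately show ?thesis using tQb by (auto simp: A'_def)
  qed
  have "set Qb \<inter> X = {}" using bQ Qb_def by auto
  then have "fan E V X t A' (t # B)"
    unfolding fan_def using p1 p2 l1 l2 b1 b2 i f t tQb Qsp Q(2) \<open>Qb \<noteq> []\<close>
    by (auto simp: fan_def A'_def hd_append)
  then show ?thesis by blast
qed

lemma fan_step:
  assumes tnc: "two_node_connected V E" and e: "{t,y} \<in> E" and t: "t \<in> V" "t \<notin> X"
    and y: "y \<notin> X" "t \<noteq> y" and f: "fan E V X y A B"
  shows "\<exists>A' B'. fan E V X t A' B'"
proof -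
  have pA: "pth E V A" and pB: "pth E V B" using f by (auto simp: fan_def)
  show ?thesis
  proof (cases "t \<in> set A")
    case True then show ?thesis using step_inA[OF f True y(2) e t] by blast
  next
    case tA: False
    show ?thesis
    proof (cases "t \<in> set B")
      case True then show ?thesis using step_inA[OF fan_sym[OF f] True y(2) e t] by blast
    next
      case tB: False
      have yV: "y \<in> V" using f pA by (auto simp: fan_def pth_def)
      have "connected_graph (V - {y}) {e\<in>E. y \<notin> e}" using tnc yV by (simp add: two_node_connected_def)
      moreover have lA: "last A \<in> V - {y}" "last A \<in> X" using f pA y by (auto simp: fan_def pth_def)
      ultimately have "(t, last A) \<in> (adj (V - {y}) {e\<in>E. y \<notin> e})\<^sup>*" using t y by (simp add: connected_graph_def)
      from reach_path[OF this, of "(set A \<union> set B \<union> X) - {y}"] obtain Q where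
        Q: "pth {e\<in>E. y \<notin> e} (V - {y}) Q" "hd Q = t" "last Q \<in> (set A \<union> set B \<union> X) - {y}"
           "set (butlast Q) \<inter> ((set A \<union> set B \<union> X) - {y}) = {}"
        using t y lA pA by (auto simp: pth_def)
      have yQ: "y \<notin> set Q" using Q(1) by (auto simp: pth_def)
      have pQ: "pth E V Q" using pth_mono[OF Q(1)] by auto
      have bQ: "set (butlast Q) \<inter> (set A \<union> set B \<union> X) = {}" using Q(4) yQ set_butlast_sub[of Q] by auto
      define z where "z = last Q"
      show ?thesis
      proof (cases "z \<in> set A")
        case True
        show ?thesis using step_hitA[OF f tA tB t(2) t(1) pQ Q(2) z_def[symmetric] True _ yQ bQ e] Q(3) z_def by auto
      next
        case zA: False
        show ?thesis
        proof (cases "z \<in> set B")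
          case True
          have bQ': "set (butlast Q) \<inter> (set B \<union> set A \<union> X) = {}" using bQ by auto
          show ?thesis using step_hitA[OF fan_sym[OF f] tB tA t(2) t(1) pQ Q(2) z_def[symmetric] True _ yQ bQ' e] Q(3) z_def by auto
        next
          case zB: False
          have zX: "z \<in> X" using Q(3) zA zB z_def by auto
          have hA: "hd A = y" "A \<noteq> []" using f pA by (auto simp: fan_def pth_def)
          have p2: "pth E V (t # A)" using pA tA hA e t by (auto simp: pth_def we_Cons)
          have "Q \<noteq> []" using pQ by (simp add: pth_def)
          then have Qsp: "Q = butlast Q @ [z]" using z_def by simp
          have tQ: "t \<in> set Q" using Q(2) \<open>Q \<noteq> []\<close> by auto
          have i: "set Q \<inter> set (t # A) = {t}"
          proof -
            have "set (butlast Q) \<inter> set A = {}" using bQ by auto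
            then have "set Q \<inter> set A = {}" using Qsp zA by (metis Int_insert_left_if0 list.set(1) list.simps(15) set_append Int_Un_distrib2 sup_bot.right_neutral)
            then show ?thesis using tQ by auto
          qed
          have "fan E V X t Q (t # A)"
            unfolding fan_def using pQ p2 Q(2) zX z_def zA hA bQ i f t
            by (auto simp: fan_def)
          then show ?thesis by blast
        qed
      qed
    qed
  qed
qed

lemma fan_exists:
  assumes tnc: "two_node_connected V E" and X: "X \<subseteq> V" and x: "x1 \<in> X" "x2 \<in> X" "x1 \<noteq> x2"
    and t: "t \<in> V" "t \<notin> X"
  shows "\<exists>A B. fan E V X t A B"
proof -
  have "(t, x1) \<in> (adj V E)\<^sup>*" using tnc_conn[OF tnc] t x X by (auto simp: connected_graph_def)
  from reach_path[OF this t(1) x(1)] obtain P where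
    P: "pth E V P" "hd P = t" "last P \<in> X" "set (butlast P) \<inter> X = {}" by blast
  have "\<And>t. pth E V P \<Longrightarrow> hd P = t \<Longrightarrow> t \<notin> X \<Longrightarrow> last P \<in> X \<Longrightarrow> set (butlast P) \<inter> X = {}
        \<Longrightarrow> \<exists>A B. fan E V X t A B"
  proof (induction P)
    case Nil then show ?case by (simp add: pth_def)
  next
    case (Cons a P)
    have ta: "a = t" using Cons by simp
    have "P \<noteq> []" using Cons.prems by auto
    have tV: "t \<in> V" using Cons.prems ta by (simp add: pth_def)
    have e: "{t, hd P} \<in> E" using Cons.prems \<open>P \<noteq> []\<close> ta by (auto simp: pth_def we_Cons)
    have hPV: "hd P \<in> V" using Cons.prems \<open>P \<noteq> []\<close> by (auto simp: pth_def)
    have tP: "t \<noteq> hd P" using Cons.prems \<open>P \<noteq> []\<close> ta by (cases P) (auto simp: pth_def)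
    show ?case
    proof (cases "hd P \<in> X")
      case True
      obtain x' where x': "x' \<in> X" "x' \<noteq> hd P" using x by blast
      show ?thesis using fan_base[OF tnc e tV Cons.prems(3) True hPV x'(1) _ x'(2)] X x' by auto
    next
      case False
      have pP: "pth E V P" using Cons.prems \<open>P \<noteq> []\<close> by (auto simp: pth_def we_Cons)
      have "last P \<in> X" using Cons.prems \<open>P \<noteq> []\<close> by simp
      moreover have "set (butlast P) \<inter> X = {}" using Cons.prems \<open>P \<noteq> []\<close> by (auto simp: set_butlast_sub)
      ultimately obtain A B where "fan E V X (hd P) A B" using Cons.IH pP False by blast
      then show ?thesis using fan_step[OF tnc e tV Cons.prems(3) False tP] by blast
    qed
  qed
  then show ?thesis using P t by blast
qed

lemma set_butlast_last: "P \<noteq> [] \<Longrightarrow> set P = insert (last P) (set (butlast P))"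
  by (metis append_butlast_last_id list.set(1) list.simps(15) set_append Un_insert_right sup_bot.right_neutral)

lemma fan_ear:
  assumes f: "fan E V X t A B" and t: "t \<notin> X" and P: "P = rev A @ tl B"
  shows "open_ear X P \<and> walk_edges P \<subseteq> E \<and> set P \<subseteq> V \<and> t \<in> set P \<and> (\<forall>e\<in>walk_edges P. \<not> e \<subseteq> X)
    \<and> hd P = last A \<and> last P = last B \<and> (\<forall>x\<in>set P. x \<in> X \<longrightarrow> x = hd P \<or> x = last P)"
proof -
  have pA: "pth E V A" and pB: "pth E V B" using f by (auto simp: fan_def)
  have ne: "A \<noteq> []" "B \<noteq> []" using pA pB by (auto simp: pth_def)
  have hA: "hd A = t" and hB: "hd B = t" using f by (auto simp: fan_def)
  have Asp: "A = t # tl A" using ne hA by (cases A) auto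
  have Bsp: "B = t # tl B" using ne hB by (cases B) auto
  have "tl B \<noteq> []" using Bsp f t by (metis fan_def last_ConsL)
  have "tl A \<noteq> []" using Asp f t by (metis fan_def last_ConsL)
  have dA: "distinct A" and dB: "distinct B" using pA pB by (auto simp: pth_def)
  have tB: "t \<notin> set (tl B)" using dB Bsp by (metis distinct.simps(2))
  have "set (tl B) \<subseteq> set B" using Bsp by (metis set_subset_Cons)
  then have "set A \<inter> set (tl B) \<subseteq> {t}" using f by (auto simp: fan_def)
  then have "set A \<inter> set (tl B) = {}" using tB by auto
  then have dP: "distinct P" using dA dB P by (simp add: distinct_tl)
  have hP: "hd P = last A" using P ne by (simp add: hd_rev)
  have lP: "last P = last B" using P \<open>tl B \<noteq> []\<close> by (simp add: last_tl)
  have Psp: "P = rev (tl A) @ t # tl B" using P Asp by (metis append.assoc append_Cons append_Nil rev.simps(2))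
  have wP: "walk_edges P = walk_edges A \<union> walk_edges B"
    using we_append[of "rev (tl A)" t "tl B"] Psp Asp Bsp by (metis rev.simps(2) we_rev)
  have sP: "set P = set A \<union> set B" using P Bsp by (metis Un_insert_right list.simps(15) set_append set_rev Asp Un_insert_left insert_absorb2 list.set_intros(1))
  have inX: "\<forall>x\<in>set P. x \<in> X \<longrightarrow> x = hd P \<or> x = last P"
  proof (intro ballI impI)
    fix x assume "x \<in> set P" "x \<in> X"
    then have "x \<in> set A \<or> x \<in> set B" using sP by auto
    then show "x = hd P \<or> x = last P"
    proof
      assume "x \<in> set A"
      then have "x = last A \<or> x \<in> set (butlast A)" using set_butlast_last[OF ne(1)] by auto
      then show ?thesis using f \<open>x \<in> X\<close> hP by (auto simp: fan_def)
    next
      assume "x \<in> set B"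
      then have "x = last B \<or> x \<in> set (butlast B)" using set_butlast_last[OF ne(2)] by auto
      then show ?thesis using f \<open>x \<in> X\<close> lP by (auto simp: fan_def)
    qed
  qed
  have lenP: "length P \<ge> 2" using Psp \<open>tl A \<noteq> []\<close> by (cases "tl A") auto
  have mid: "set (butlast (tl P)) \<inter> X = {}"
  proof -
    have eq: "P = hd P # butlast (tl P) @ [last P]" using hd_mid_last[OF lenP] .
    have d2: "distinct (hd P # butlast (tl P) @ [last P])" using dP eq by metis
    have "hd P \<notin> set (butlast (tl P))" "last P \<notin> set (butlast (tl P))"
      using d2 by auto
    moreover have "set (butlast (tl P)) \<subseteq> set P" using eq by (metis set_butlast_sub list.set_sel(2) subsetI in_set_butlastD list.sel(3) list.simps(3))
    ultimately show ?thesis using inX by blast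
  qed
  have oe: "open_ear X P" unfolding open_ear_def using lenP dP hP lP f mid by (auto simp: fan_def)
  have nX: "\<forall>e\<in>walk_edges P. \<not> e \<subseteq> X"
  proof
    fix e assume "e \<in> walk_edges P"
    then have "e \<in> walk_edges A \<or> e \<in> walk_edges B" using wP by auto
    then have "e \<inter> set (butlast A) \<noteq> {} \<or> e \<inter> set (butlast B) \<noteq> {}" using we_butlast by blast
    then show "\<not> e \<subseteq> X" using f by (auto simp: fan_def)
  qed
  have "t \<in> set A" using hA ne by (metis hd_in_set)
  then show ?thesis using oe wP pA pB sP nX hP lP inX by (auto simp: pth_def)
qed

lemma seg_reach:
  assumes "L \<noteq> []" "walk_edges L \<subseteq> E" "set L \<subseteq> V - {v}" "x \<in> set L"
  shows "(x, last L) \<in> (adj (V - {v}) {e\<in>E. v \<notin> e})\<^sup>*" "(x, hd L) \<in> (adj (V - {v}) {e\<in>E. v \<notin> e})\<^sup>*"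
proof -
  have "walk_edges L \<subseteq> {e\<in>E. v \<notin> e}" using assms(2,3) we_subset_set by fastforce
  then show "(x, last L) \<in> (adj (V - {v}) {e\<in>E. v \<notin> e})\<^sup>*" "(x, hd L) \<in> (adj (V - {v}) {e\<in>E. v \<notin> e})\<^sup>*"
    using walk_reach walk_reach_hd assms by metis+
qed

lemma tnc_finite: "two_node_connected V E \<Longrightarrow> finite V"
  by (simp add: two_node_connected_def card_ge_0_finite)

lemma tnc_ear:
  assumes tnc: "two_node_connected V E" and EV: "\<forall>e\<in>E. e \<subseteq> V" and ab: "a \<in> V" "b \<in> V" "a \<noteq> b"
    and M: "set M \<inter> V = {}" "distinct M"
  shows "two_node_connected (V \<union> set (a # M @ [b])) (E \<union> walk_edges (a # M @ [b]))"
proof -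
  define V2 where "V2 = V \<union> set (a # M @ [b])"
  define E2 where "E2 = E \<union> walk_edges (a # M @ [b])"
  have V2: "V2 = V \<union> set M" using ab V2_def by auto
  have fin: "finite V2" using tnc_finite[OF tnc] V2 by simp
  have "card V \<le> card V2" using fin V2 by (simp add: card_mono)
  then have c: "card V2 > 2" using tnc by (simp add: two_node_connected_def)
  have conn: "connected_graph (V2 - {v}) {e\<in>E2. v \<notin> e}" if v: "v \<in> V2" for v
  proof -
    let ?R = "adj (V2 - {v}) {e\<in>E2. v \<notin> e}"
    have wE2: "walk_edges (a # M @ [b]) \<subseteq> E2" by (simp add: E2_def)
    show ?thesis
    proof (cases "v \<in> V")
      case True
      have Hv: "connected_graph (V - {v}) {e\<in>E. v \<notin> e}" using tnc True by (simp add: two_node_connected_def)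
      have mono: "\<And>x y. (x,y) \<in> (adj (V - {v}) {e\<in>E. v \<notin> e})\<^sup>* \<Longrightarrow> (x,y) \<in> ?R\<^sup>*"
        by (rule rtr_mono[rotated 2]) (auto simp: V2_def E2_def)
      have vM: "v \<notin> set M" using True M by auto
      show ?thesis
      proof (cases "v = b")
        case True
        show ?thesis
        proof (rule conn_hub[where r=a])
          fix x assume x: "x \<in> V2 - {v}"
          show "(x, a) \<in> ?R\<^sup>*"
          proof (cases "x \<in> V")
            case True then show ?thesis using Hv mono x ab \<open>v = b\<close> by (auto simp: connected_graph_def)
          next
            case False
            then have xM: "x \<in> set (a # M)" using x V2 by auto
            have "walk_edges (a # M) \<subseteq> E2" using wE2 we_prefix[of "a # M" "[b]"] by auto
            moreover have "set (a # M) \<subseteq> V2 - {v}" using \<open>v = b\<close> ab M V2 by auto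
            ultimately show ?thesis using seg_reach(2)[of "a # M" E2 V2 v x] xM by simp
          qed
        qed
      next
        case False
        show ?thesis
        proof (rule conn_hub[where r=b])
          fix x assume x: "x \<in> V2 - {v}"
          show "(x, b) \<in> ?R\<^sup>*"
          proof (cases "x \<in> V")
            case True then show ?thesis using Hv mono x ab \<open>v \<noteq> b\<close> by (auto simp: connected_graph_def)
          next
            case False
            then have xM: "x \<in> set (M @ [b])" using x V2 by auto
            have "walk_edges (M @ [b]) \<subseteq> E2" using wE2 we_suffix[of "M @ [b]" "[a]"] by auto
            moreover have "set (M @ [b]) \<subseteq> V2 - {v}" using \<open>v \<noteq> b\<close> vM ab V2 by auto
            ultimately show ?thesis using seg_reach(1)[of "M @ [b]" E2 V2 v x] xM by simp
          qed
        qed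
      qed
    next
      case False
      then have "v \<in> set M" using v V2 by auto
      then obtain M1 M2 where sp: "M = M1 @ v # M2" by (meson split_list)
      have vM12: "v \<notin> set M1" "v \<notin> set M2" using M(2) sp by auto
      have mono: "\<And>x y. (x,y) \<in> (adj V E)\<^sup>* \<Longrightarrow> (x,y) \<in> ?R\<^sup>*"
        by (rule rtr_mono[rotated 2]) (use False EV in \<open>auto simp: V2_def E2_def\<close>)
      have HV: "connected_graph V E" using tnc_conn[OF tnc] .
      show ?thesis
      proof (rule conn_hub[where r=a])
        fix x assume x: "x \<in> V2 - {v}"
        show "(x, a) \<in> ?R\<^sup>*"
        proof (cases "x \<in> V")
          case True then show ?thesis using HV mono ab by (auto simp: connected_graph_def)
        next
          case xV: False
          then have "x \<in> set M1 \<or> x \<in> set M2" using x V2 sp by auto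
          then show ?thesis
          proof
            assume xM: "x \<in> set M1"
            have "a # M @ [b] = (a # M1) @ (v # M2 @ [b])" using sp by simp
            then have "walk_edges (a # M1) \<subseteq> E2" using wE2 we_prefix[of "a # M1" "v # M2 @ [b]"] by auto
            moreover have "set (a # M1) \<subseteq> V2 - {v}" using vM12 ab False V2 sp by auto
            ultimately show ?thesis using seg_reach(2)[of "a # M1" E2 V2 v x] xM by simp
          next
            assume xM: "x \<in> set M2"
            have "a # M @ [b] = (a # M1 @ [v]) @ (M2 @ [b])" using sp by simp
            then have "walk_edges (M2 @ [b]) \<subseteq> E2" using wE2 we_suffix[of "M2 @ [b]" "a # M1 @ [v]"] by auto
            moreover have "set (M2 @ [b]) \<subseteq> V2 - {v}" using vM12 ab False V2 sp by auto
            ultimately have "(x, b) \<in> ?R\<^sup>*" using seg_reach(1)[of "M2 @ [b]" E2 V2 v x] xM by simp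
            moreover have "(b, a) \<in> ?R\<^sup>*" using HV mono ab by (auto simp: connected_graph_def)
            ultimately show ?thesis by (rule rtrancl_trans)
          qed
        qed
      qed
    qed
  qed
  show ?thesis using c conn unfolding two_node_connected_def V2_def E2_def by blast
qed

lemma tnc_cycle:
  assumes M: "t0 \<notin> set M" "distinct M" "length M \<ge> 2"
  shows "two_node_connected (set (t0 # M @ [t0])) (walk_edges (t0 # M @ [t0]))"
proof -
  define V2 where "V2 = set (t0 # M @ [t0])"
  define E2 where "E2 = walk_edges (t0 # M @ [t0])"
  have V2: "V2 = insert t0 (set M)" by (auto simp: V2_def)
  have "card V2 = Suc (length M)" using V2 M by (simp add: distinct_card)
  then have c: "card V2 > 2" using M by simp
  have conn: "connected_graph (V2 - {v}) {e\<in>E2. v \<notin> e}" if v: "v \<in> V2" for v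
  proof -
    let ?R = "adj (V2 - {v}) {e\<in>E2. v \<notin> e}"
    have wE2: "walk_edges (t0 # M @ [t0]) \<subseteq> E2" by (simp add: E2_def)
    show ?thesis
    proof (cases "v = t0")
      case True
      show ?thesis
      proof (rule conn_hub[where r="last M"])
        fix x assume x: "x \<in> V2 - {v}"
        then have xM: "x \<in> set M" using V2 True by auto
        have "walk_edges M \<subseteq> walk_edges (M @ [t0])" by (rule we_prefix)
        also have "\<dots> \<subseteq> walk_edges ([t0] @ M @ [t0])" by (rule we_suffix)
        finally have "walk_edges M \<subseteq> E2" using wE2 by simp
        moreover have "set M \<subseteq> V2 - {v}" using True M V2 by auto
        moreover have "M \<noteq> []" using M by auto
        ultimately show "(x, last M) \<in> ?R\<^sup>*" using seg_reach(1)[of M E2 V2 v x] xM by simp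
      qed
    next
      case False
      then have "v \<in> set M" using v V2 by auto
      then obtain M1 M2 where sp: "M = M1 @ v # M2" by (meson split_list)
      have vM12: "v \<notin> set M1" "v \<notin> set M2" using M(2) sp by auto
      show ?thesis
      proof (rule conn_hub[where r=t0])
        fix x assume x: "x \<in> V2 - {v}"
        show "(x, t0) \<in> ?R\<^sup>*"
        proof (cases "x = t0")
          case True then show ?thesis by simp
        next
          case xt: False
          then have "x \<in> set M1 \<or> x \<in> set M2" using x V2 sp by auto
          then show ?thesis
          proof
            assume xM: "x \<in> set M1"
            have "t0 # M @ [t0] = (t0 # M1) @ (v # M2 @ [t0])" using sp by simp
            then have "walk_edges (t0 # M1) \<subseteq> E2" using wE2 we_prefix[of "t0 # M1" "v # M2 @ [t0]"] by auto
            moreover have "set (t0 # M1) \<subseteq> V2 - {v}" using vM12 False V2 sp by auto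
            ultimately show ?thesis using seg_reach(2)[of "t0 # M1" E2 V2 v x] xM by simp
          next
            assume xM: "x \<in> set M2"
            have "t0 # M @ [t0] = (t0 # M1 @ [v]) @ (M2 @ [t0])" using sp by simp
            then have "walk_edges (M2 @ [t0]) \<subseteq> E2" using wE2 we_suffix[of "M2 @ [t0]" "t0 # M1 @ [v]"] by auto
            moreover have "set (M2 @ [t0]) \<subseteq> V2 - {v}" using vM12 False V2 sp by auto
            ultimately show ?thesis using seg_reach(1)[of "M2 @ [t0]" E2 V2 v x] xM by simp
          qed
        qed
      qed
    qed
  qed
  show ?thesis using c conn unfolding two_node_connected_def V2_def E2_def by blast
qed

definition UE :: "'a list list \<Rightarrow> 'a set set" where
  "UE Ps = (\<Union>i<length Ps. walk_edges (Ps!i))"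

lemma ev_append: "i \<le> length Ps \<Longrightarrow> ear_verts (Ps @ [P]) i = ear_verts Ps i"
  unfolding ear_verts_def by (auto simp: nth_append)

lemma ev_Suc: "ear_verts Ps (Suc i) = ear_verts Ps i \<union> set (Ps!i)"
  unfolding ear_verts_def by (auto simp: lessThan_Suc)

lemma ev_len_append: "ear_verts (Ps @ [P]) (Suc (length Ps)) = ear_verts Ps (length Ps) \<union> set P"
  by (simp add: ev_Suc ev_append)

lemma UE_append: "UE (Ps @ [P]) = UE Ps \<union> walk_edges P"
  unfolding UE_def by (auto simp: nth_append lessThan_Suc)

lemma UE_sub: "e \<in> UE Ps \<Longrightarrow> e \<subseteq> ear_verts Ps (length Ps)"
  unfolding UE_def ear_verts_def using we_subset_set by fastforce

lemma ev_mono: "i \<le> j \<Longrightarrow> ear_verts Ps i \<subseteq> ear_verts Ps j"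
  unfolding ear_verts_def by (auto intro: less_le_trans)

lemma set_sub_ev: "i < j \<Longrightarrow> set (Ps!i) \<subseteq> ear_verts Ps j"
  unfolding ear_verts_def by auto

definition Inv :: "'a set \<Rightarrow> 'a set set \<Rightarrow> 'a set \<Rightarrow> 'a list list \<Rightarrow> bool" where
  "Inv V E T Ps \<longleftrightarrow> 2 \<le> length Ps \<and> length (Ps!0) = 1 \<and> hd (Ps!0) \<in> T
    \<and> closed_ear (ear_verts Ps 1) (Ps!1)
    \<and> (\<forall>i\<in>{2..<length Ps}. open_ear (ear_verts Ps i) (Ps!i))
    \<and> (\<forall>i<length Ps. \<forall>j<length Ps. i \<noteq> j \<longrightarrow> walk_edges (Ps!i) \<inter> walk_edges (Ps!j) = {})
    \<and> (\<forall>i<length Ps. walk_edges (Ps!i) \<subseteq> E \<and> set (Ps!i) \<subseteq> V)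
    \<and> (\<forall>i\<in>{1..<length Ps}. ear_int Ps i \<inter> T \<noteq> {})
    \<and> two_node_connected (ear_verts Ps (length Ps)) (UE Ps)"

lemma Inv_ext:
  assumes I: "Inv V E T Ps" and W: "W = ear_verts Ps (length Ps)" and oe: "open_ear W P"
    and PE: "walk_edges P \<subseteq> E" "set P \<subseteq> V" and nW: "\<forall>e\<in>walk_edges P. \<not> e \<subseteq> W"
    and t: "t \<in> set P" "t \<in> T" "t \<notin> W"
  shows "Inv V E T (Ps @ [P])"
proof -
  let ?Q = "Ps @ [P]"
  have len: "length ?Q = Suc (length Ps)" by simp
  have L2: "2 \<le> length Ps" using I by (simp add: Inv_def)
  have nth_old: "\<And>i. i < length Ps \<Longrightarrow> ?Q ! i = Ps ! i" by (simp add: nth_append)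
  have nth_new: "?Q ! length Ps = P" by simp
  have ev_old: "\<And>i. i \<le> length Ps \<Longrightarrow> ear_verts ?Q i = ear_verts Ps i" by (rule ev_append)
  have a1: "closed_ear (ear_verts ?Q 1) (?Q!1)" using I L2 nth_old ev_old by (simp add: Inv_def)
  have "0 < length Ps" using L2 by linarith
  then have "?Q!0 = Ps!0" by (simp add: nth_append)
  then have a0: "length (?Q!0) = 1 \<and> hd (?Q!0) \<in> T" using I by (simp add: Inv_def)
  have a2: "\<forall>i\<in>{2..<length ?Q}. open_ear (ear_verts ?Q i) (?Q!i)"
  proof
    fix i assume i: "i \<in> {2..<length ?Q}"
    show "open_ear (ear_verts ?Q i) (?Q!i)"
    proof (cases "i < length Ps")
      case True then show ?thesis using I i nth_old ev_old by (simp add: Inv_def)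
    next
      case False then have "i = length Ps" using i by simp
      then show ?thesis using oe W ev_old by simp
    qed
  qed
  have a3: "\<forall>i<length ?Q. \<forall>j<length ?Q. i \<noteq> j \<longrightarrow> walk_edges (?Q!i) \<inter> walk_edges (?Q!j) = {}"
  proof (intro allI impI)
    fix i j assume ij: "i < length ?Q" "j < length ?Q" "i \<noteq> j"
    have new: "walk_edges P \<inter> walk_edges (Ps!k) = {}" if k: "k < length Ps" for k
    proof -
      have "\<forall>e\<in>walk_edges (Ps!k). e \<subseteq> W" using W k we_subset_set set_sub_ev[of k "length Ps" Ps] by blast
      then show ?thesis using nW by blast
    qed
    show "walk_edges (?Q!i) \<inter> walk_edges (?Q!j) = {}"
    proof (cases "i < length Ps \<and> j < length Ps")
      case True then show ?thesis using I ij nth_old by (simp add: Inv_def)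
    next
      case False
      then have "(i = length Ps \<and> j < length Ps) \<or> (j = length Ps \<and> i < length Ps)" using ij by auto
      then show ?thesis
      proof
        assume "i = length Ps \<and> j < length Ps" then show ?thesis using new nth_old by simp
      next
        assume "j = length Ps \<and> i < length Ps" then show ?thesis using new nth_old by (simp add: Int_commute)
      qed
    qed
  qed
  have a4: "\<forall>i<length ?Q. walk_edges (?Q!i) \<subseteq> E \<and> set (?Q!i) \<subseteq> V"
    using I PE by (auto simp: Inv_def nth_append less_Suc_eq)
  have a5: "\<forall>i\<in>{1..<length ?Q}. ear_int ?Q i \<inter> T \<noteq> {}"
  proof
    fix i assume i: "i \<in> {1..<length ?Q}"
    show "ear_int ?Q i \<inter> T \<noteq> {}"
    proof (cases "i < length Ps")
      case True then show ?thesis using I i nth_old ev_old by (simp add: Inv_def ear_int_def)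
    next
      case False then have "i = length Ps" using i by simp
      then show ?thesis using t W ev_old by (auto simp: ear_int_def)
    qed
  qed
  have a6: "two_node_connected (ear_verts ?Q (length ?Q)) (UE ?Q)"
  proof -
    have lenP: "length P \<ge> 2" and dP: "distinct P" and hl: "hd P \<in> W" "last P \<in> W"
      and mid: "set (butlast (tl P)) \<inter> W = {}" using oe by (auto simp: open_ear_def)
    have Psp: "P = hd P # butlast (tl P) @ [last P]" by (rule hd_mid_last[OF lenP])
    then have dP2: "distinct (hd P # butlast (tl P) @ [last P])" using dP by metis
    then have "hd P \<noteq> last P" "distinct (butlast (tl P))" by auto
    have tnc: "two_node_connected W (UE Ps)" using I W by (simp add: Inv_def)
    have EV: "\<forall>e\<in>UE Ps. e \<subseteq> W" using UE_sub W by blast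
    have "two_node_connected (W \<union> set (hd P # butlast (tl P) @ [last P]))
            (UE Ps \<union> walk_edges (hd P # butlast (tl P) @ [last P]))"
      by (rule tnc_ear[OF tnc EV hl \<open>hd P \<noteq> last P\<close> mid \<open>distinct (butlast (tl P))\<close>])
    then show ?thesis using Psp W by (simp add: ev_len_append UE_append)
  qed
  show ?thesis unfolding Inv_def using a0 a1 a2 a3 a4 a5 a6 L2 by simp
qed

lemma Inv_init:
  assumes T: "t0 \<in> T" "t1 \<in> T" and M: "t0 \<notin> set M" "t1 \<in> set M" "distinct M" "length M \<ge> 2"
    and EV: "walk_edges (t0 # M @ [t0]) \<subseteq> E" "t0 \<in> V" "set M \<subseteq> V"
  shows "Inv V E T [[t0], t0 # M @ [t0]]"
proof -
  let ?C = "t0 # M @ [t0]"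
  let ?Ps = "[[t0], ?C]"
  have ev1: "ear_verts ?Ps 1 = {t0}" by (simp add: ear_verts_def lessThan_Suc)
  have ev2: "ear_verts ?Ps 2 = set ?C" by (auto simp: ear_verts_def lessThan_Suc numeral_2_eq_2)
  have ue: "UE ?Ps = walk_edges ?C" by (auto simp: UE_def lessThan_Suc numeral_2_eq_2)
  have ce: "closed_ear (ear_verts ?Ps 1) (?Ps!1)" using M ev1 by (auto simp: closed_ear_def)
  have "ear_int ?Ps 1 = set ?C - {t0}" unfolding ear_int_def using ev1 by simp
  then have "t1 \<in> ear_int ?Ps 1" using M by auto
  then have ei: "ear_int ?Ps 1 \<inter> T \<noteq> {}" using T by blast
  have tnc: "two_node_connected (ear_verts ?Ps (length ?Ps)) (UE ?Ps)"
    using tnc_cycle[OF M(1) M(3) M(4)] ev2 ue by (simp add: numeral_2_eq_2)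
  have dj: "\<forall>i<length ?Ps. \<forall>j<length ?Ps. i \<noteq> j \<longrightarrow> walk_edges (?Ps!i) \<inter> walk_edges (?Ps!j) = {}"
    by (auto simp: less_Suc_eq numeral_2_eq_2)
  have sub: "\<forall>i<length ?Ps. walk_edges (?Ps!i) \<subseteq> E \<and> set (?Ps!i) \<subseteq> V"
    using EV by (auto simp: less_Suc_eq numeral_2_eq_2)
  have "{1..<length ?Ps} = {1}" by auto
  then show ?thesis unfolding Inv_def using ce ei tnc dj sub T by simp
qed

lemma third_vertex:
  assumes "card V > 2" shows "\<exists>z\<in>V. z \<noteq> x \<and> z \<noteq> y"
proof -
  have "card (V - {x,y}) \<ge> card V - card {x,y}" by (rule diff_card_le_card_Diff) simp
  moreover have "card {x,y} \<le> 2" by (simp add: card_insert_if)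
  ultimately have "card (V - {x,y}) > 0" using assms by linarith
  then have "V - {x,y} \<noteq> {}" by (metis card.empty less_irrefl)
  then show ?thesis by auto
qed

lemma nbr:
  assumes tnc: "two_node_connected V E" and c2: "\<forall>e\<in>E. card e = 2"
    and u: "u \<in> V" and w: "w \<in> V" "u \<noteq> w"
  shows "\<exists>z. {u,z} \<in> E \<and> z \<in> V \<and> z \<noteq> w \<and> z \<noteq> u"
proof -
  obtain z0 where z0: "z0 \<in> V" "z0 \<noteq> u" "z0 \<noteq> w" using third_vertex[of V u w] tnc
    by (auto simp: two_node_connected_def)
  have "connected_graph (V - {w}) {e\<in>E. w \<notin> e}" using tnc w by (simp add: two_node_connected_def)
  then have "(u, z0) \<in> (adj (V - {w}) {e\<in>E. w \<notin> e})\<^sup>*" using u w z0 by (simp add: connected_graph_def)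
  then obtain z where "(u, z) \<in> adj (V - {w}) {e\<in>E. w \<notin> e}" using z0(2)
    by (metis converse_rtranclE)
  then have z: "{u,z} \<in> E" "z \<in> V" "z \<noteq> w" by (auto simp: adj_def)
  have "z \<noteq> u" using c2 z(1) by fastforce
  then show ?thesis using z by blast
qed

lemma fan_not_end:
  assumes f: "fan E V X t A B" and X: "X = insert t0 {z\<in>V. {t0,z} \<in> E}" and tt: "t \<noteq> t0"
  shows "last A \<noteq> t0"
proof
  assume l: "last A = t0"
  have pA: "pth E V A" using f by (simp add: fan_def)
  have "A \<noteq> []" using pA by (simp add: pth_def)
  have "hd A = t" using f by (simp add: fan_def)
  have "butlast A \<noteq> []"
  proof
    assume "butlast A = []"
    then have "A = [last A]" using \<open>A \<noteq> []\<close> by (metis append_butlast_last_id append_Nil)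
    then show False using \<open>hd A = t\<close> l tt by (metis list.sel(1))
  qed
  have Asp: "A = butlast A @ [t0]" using \<open>A \<noteq> []\<close> l by (metis append_butlast_last_id)
  then have "{last (butlast A), t0} \<in> walk_edges A" using we_snoc[OF \<open>butlast A \<noteq> []\<close>, of t0] by simp
  then have e: "{t0, last (butlast A)} \<in> E" using pA by (auto simp: pth_def insert_commute)
  have p: "last (butlast A) \<in> set (butlast A)" using \<open>butlast A \<noteq> []\<close> by simp
  then have "last (butlast A) \<in> V" using pA set_butlast_sub by (fastforce simp: pth_def)
  then have "last (butlast A) \<in> X" using X e by simp
  then show False using f p by (auto simp: fan_def)
qed

lemma init_cycle:
  assumes tnc: "two_node_connected V E" and c2: "\<forall>e\<in>E. card e = 2" and EV: "\<forall>e\<in>E. e \<subseteq> V"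
    and t: "t0 \<in> V" "t1 \<in> V" "t0 \<noteq> t1"
  shows "\<exists>M. t0 \<notin> set M \<and> t1 \<in> set M \<and> distinct M \<and> length M \<ge> 2
             \<and> walk_edges (t0 # M @ [t0]) \<subseteq> E \<and> set M \<subseteq> V"
proof (cases "{t0,t1} \<in> E")
  case True
  obtain w where w: "{t0,w} \<in> E" "w \<in> V" "w \<noteq> t1" "w \<noteq> t0" using nbr[OF tnc c2 t] by blast
  have "connected_graph (V - {t0}) {e\<in>E. t0 \<notin> e}" using tnc t by (simp add: two_node_connected_def)
  then have "(t1, w) \<in> (adj (V - {t0}) {e\<in>E. t0 \<notin> e})\<^sup>*" using t w by (simp add: connected_graph_def)
  from reach_path[OF this _, of "{w}"] obtain Q where
    Q: "pth {e\<in>E. t0 \<notin> e} (V - {t0}) Q" "hd Q = t1" "last Q = w" using t by auto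
  have Qne: "Q \<noteq> []" and dQ: "distinct Q" and sQ: "set Q \<subseteq> V - {t0}" and wQ: "walk_edges Q \<subseteq> E"
    using Q(1) by (auto simp: pth_def)
  have "length Q \<ge> 2"
  proof (rule ccontr)
    assume "\<not> length Q \<ge> 2"
    then have "length Q = 1" using Qne by (cases Q) (auto simp: Suc_le_eq)
    then have "hd Q = last Q" by (cases Q) auto
    then show False using Q w by simp
  qed
  have "walk_edges (t0 # Q @ [t0]) = insert {t0, t1} (insert {w, t0} (walk_edges Q))"
    using Qne Q by (simp add: we_Cons we_snoc hd_append)
  then have "walk_edges (t0 # Q @ [t0]) \<subseteq> E" using True w wQ by (auto simp: insert_commute)
  moreover have "t1 \<in> set Q" using Q Qne by auto
  ultimately show ?thesis using sQ dQ \<open>length Q \<ge> 2\<close> by (intro exI[of _ Q]) auto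
next
  case False
  define X where "X = insert t0 {z\<in>V. {t0,z} \<in> E}"
  obtain w where w: "{t0,w} \<in> E" "w \<in> V" "w \<noteq> t1" "w \<noteq> t0" using nbr[OF tnc c2 t] by blast
  have XV: "X \<subseteq> V" using X_def t by auto
  have t1X: "t1 \<notin> X" using X_def False t by auto
  have "t0 \<in> X" "w \<in> X" using X_def w by auto
  from fan_exists[OF tnc XV this w(4)[symmetric] t(2) t1X] obtain A B where f: "fan E V X t1 A B" by blast
  define P where "P = rev A @ tl B"
  have fe: "open_ear X P \<and> walk_edges P \<subseteq> E \<and> set P \<subseteq> V \<and> t1 \<in> set P \<and> (\<forall>e\<in>walk_edges P. \<not> e \<subseteq> X)
    \<and> hd P = last A \<and> last P = last B \<and> (\<forall>x\<in>set P. x \<in> X \<longrightarrow> x = hd P \<or> x = last P)"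
    by (rule fan_ear[OF f t1X P_def])
  have nA: "last A \<noteq> t0" using fan_not_end[OF f X_def] t by blast
  have nB: "last B \<noteq> t0" using fan_not_end[OF fan_sym[OF f] X_def] t by blast
  have "last A \<in> X" "last B \<in> X" using f by (auto simp: fan_def)
  then have eA: "{t0, hd P} \<in> E" and eB: "{last P, t0} \<in> E" using nA nB fe X_def by (auto simp: insert_commute)
  have oe: "length P \<ge> 2" "distinct P" using fe by (auto simp: open_ear_def)
  have Pne: "P \<noteq> []" using oe by auto
  have t0P: "t0 \<notin> set P" using fe nA nB \<open>t0 \<in> X\<close> by metis
  have "walk_edges (t0 # P @ [t0]) = insert {t0, hd P} (insert {last P, t0} (walk_edges P))"
    using Pne by (simp add: we_Cons we_snoc hd_append)
  then have "walk_edges (t0 # P @ [t0]) \<subseteq> E" using eA eB fe by auto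
  then show ?thesis using t0P fe oe by (intro exI[of _ P]) auto
qed

lemma Inv_loop:
  assumes tnc: "two_node_connected V E" and finT: "finite T" and TV: "T \<subseteq> V"
  shows "Inv V E T Ps \<Longrightarrow> \<exists>Ps'. Inv V E T Ps' \<and> T \<subseteq> ear_verts Ps' (length Ps')"
proof (induction "card (T - ear_verts Ps (length Ps))" arbitrary: Ps rule: less_induct)
  case less
  define W where "W = ear_verts Ps (length Ps)"
  show ?case
  proof (cases "T \<subseteq> W")
    case True then show ?thesis using less.prems W_def by blast
  next
    case False
    then obtain t where t: "t \<in> T" "t \<notin> W" by blast
    have "\<forall>i<length Ps. set (Ps!i) \<subseteq> V" using less.prems by (simp add: Inv_def)
    then have WV: "W \<subseteq> V" unfolding W_def ear_verts_def by blast
    have tW: "two_node_connected W (UE Ps)" using less.prems W_def by (simp add: Inv_def)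
    then have cW: "card W > 2" by (simp add: two_node_connected_def)
    obtain x1 where x1: "x1 \<in> W" using third_vertex[OF cW] by blast
    obtain x2 where x2: "x2 \<in> W" "x2 \<noteq> x1" using third_vertex[OF cW, of x1 x1] by blast
    have tV: "t \<in> V" using t TV by blast
    obtain A B where f: "fan E V W t A B" using fan_exists[OF tnc WV x1 x2(1) x2(2)[symmetric] tV t(2)] by blast
    define P where "P = rev A @ tl B"
    have fe: "open_ear W P \<and> walk_edges P \<subseteq> E \<and> set P \<subseteq> V \<and> t \<in> set P \<and> (\<forall>e\<in>walk_edges P. \<not> e \<subseteq> W)
      \<and> hd P = last A \<and> last P = last B \<and> (\<forall>x\<in>set P. x \<in> W \<longrightarrow> x = hd P \<or> x = last P)"
      by (rule fan_ear[OF f t(2) P_def])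
    have I2: "Inv V E T (Ps @ [P])" 
      by (rule Inv_ext[OF less.prems W_def]) (use fe t in simp_all)
    have "ear_verts (Ps @ [P]) (length (Ps @ [P])) = W \<union> set P" using W_def by (simp add: ev_len_append)
    then have "T - ear_verts (Ps @ [P]) (length (Ps @ [P])) \<subset> T - W" using fe t by auto
    then have "card (T - ear_verts (Ps @ [P]) (length (Ps @ [P]))) < card (T - W)"
      using finT by (meson finite_Diff psubset_card_mono)
    then have "card (T - ear_verts (Ps @ [P]) (length (Ps @ [P]))) < card (T - ear_verts Ps (length Ps))"
      using W_def by simp
    from less.hyps[OF this I2] show ?thesis .
  qed
qed

lemma card_we_v:
  assumes "distinct (butlast P)" "distinct (tl P)"
  shows "card {e \<in> walk_edges P. v \<in> e} \<le> 2"
proof -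
  define K1 where "K1 = {k. Suc k < length P \<and> P!k = v}"
  define K2 where "K2 = {k. Suc k < length P \<and> P!Suc k = v}"
  have f1: "finite K1" "finite K2" unfolding K1_def K2_def
    by (rule finite_subset[of _ "{..<length P}"], auto)+
  have c1: "card K1 \<le> 1"
  proof -
    have "\<forall>a\<in>K1. \<forall>b\<in>K1. a = b"
    proof (intro ballI)
      fix a b assume "a \<in> K1" "b \<in> K1"
      then have "butlast P ! a = butlast P ! b" "a < length (butlast P)" "b < length (butlast P)"
        unfolding K1_def by (auto simp: nth_butlast)
      then show "a = b" using assms(1) nth_eq_iff_index_eq by blast
    qed
    then show ?thesis using f1 card_le_Suc0_iff_eq by auto
  qed
  have c2: "card K2 \<le> 1"
  proof -
    have "\<forall>a\<in>K2. \<forall>b\<in>K2. a = b"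
    proof (intro ballI)
      fix a b assume "a \<in> K2" "b \<in> K2"
      then have "tl P ! a = tl P ! b" "a < length (tl P)" "b < length (tl P)"
        unfolding K2_def by (auto simp: nth_tl)
      then show "a = b" using assms(2) nth_eq_iff_index_eq by blast
    qed
    then show ?thesis using f1 card_le_Suc0_iff_eq by auto
  qed
  have "{e \<in> walk_edges P. v \<in> e} \<subseteq> (\<lambda>k. {P!k, P!Suc k}) ` (K1 \<union> K2)"
    unfolding walk_edges_def K1_def K2_def by blast
  then have "card {e \<in> walk_edges P. v \<in> e} \<le> card ((\<lambda>k. {P!k, P!Suc k}) ` (K1 \<union> K2))"
    using f1 by (intro card_mono) auto
  also have "\<dots> \<le> card (K1 \<union> K2)" by (rule card_image_le) (use f1 in simp)
  also have "\<dots> \<le> card K1 + card K2" by (rule card_Un_le)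
  finally show ?thesis using c1 c2 by linarith
qed

lemma closed_distinct:
  assumes "closed_ear W P" shows "distinct (butlast P)" "distinct (tl P)"
proof -
  have l: "length P \<ge> 4" "hd P = last P" "distinct (tl P)" using assms by (auto simp: closed_ear_def)
  then obtain h Q where P: "P = h # Q" by (cases P) auto
  have "Q \<noteq> []" using l P by auto
  have dQ: "distinct Q" using l P by simp
  have "last Q = h" using l P \<open>Q \<noteq> []\<close> by simp
  then have "Q = butlast Q @ [h]" using \<open>Q \<noteq> []\<close> by (metis append_butlast_last_id)
  then have "distinct (butlast Q @ [h])" using dQ by metis
  then have "h \<notin> set (butlast Q)" "distinct (butlast Q)" by auto
  then show "distinct (butlast P)" using P \<open>Q \<noteq> []\<close> by simp
  show "distinct (tl P)" using l by simp
qed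

lemma endpoints_open: "open_ear W P \<Longrightarrow> v \<in> set P \<Longrightarrow> v \<in> W \<Longrightarrow> v = hd P \<or> v = last P"
proof -
  assume oe: "open_ear W P" and v: "v \<in> set P" "v \<in> W"
  have "length P \<ge> 2" "set (butlast (tl P)) \<inter> W = {}" using oe by (auto simp: open_ear_def)
  moreover have "P = hd P # butlast (tl P) @ [last P]" by (rule hd_mid_last) fact
  ultimately have "v \<in> set (hd P # butlast (tl P) @ [last P])" "v \<notin> set (butlast (tl P))" using v by auto
  then show ?thesis by auto
qed

lemma deg_bound:
  assumes D: "open_ear_decomposition V E Ps"
  shows "{v\<in>V. degree E v \<ge> 3} \<subseteq> (\<lambda>i. hd (Ps!i)) ` {2..<length Ps} \<union> (\<lambda>i. last (Ps!i)) ` {2..<length Ps}"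
proof
  fix v assume v: "v \<in> {v\<in>V. degree E v \<ge> 3}"
  show "v \<in> (\<lambda>i. hd (Ps!i)) ` {2..<length Ps} \<union> (\<lambda>i. last (Ps!i)) ` {2..<length Ps}"
  proof (rule ccontr)
    assume nR: "v \<notin> (\<lambda>i. hd (Ps!i)) ` {2..<length Ps} \<union> (\<lambda>i. last (Ps!i)) ` {2..<length Ps}"
    have ed: "ear_decomposition V E Ps" using D unfolding open_ear_decomposition_def by (elim conjE) assumption
    have L2: "length Ps \<ge> 2" using D unfolding open_ear_decomposition_def by (elim conjE) assumption
    have ce: "closed_ear (ear_verts Ps 1) (Ps ! 1)" using D unfolding open_ear_decomposition_def by (elim conjE) assumption
    have oe: "\<forall>i\<in>{2..<length Ps}. open_ear (ear_verts Ps i) (Ps ! i)"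
      using D unfolding open_ear_decomposition_def by (elim conjE) assumption
    have l0: "length (Ps!0) = 1" using ed unfolding ear_decomposition_def by (elim conjE) assumption
    have UE: "(\<Union>i<length Ps. walk_edges (Ps ! i)) = E" using ed unfolding ear_decomposition_def by (elim conjE) assumption
    have UV: "(\<Union>i<length Ps. set (Ps ! i)) = V" using ed unfolding ear_decomposition_def by (elim conjE) assumption
    have "v \<in> V" using v by simp
    then have "v \<in> (\<Union>i<length Ps. set (Ps!i))" using UV by simp
    then have "\<exists>j. j < length Ps \<and> v \<in> set (Ps!j)" by auto
    define j where "j = (LEAST j. j < length Ps \<and> v \<in> set (Ps!j))"
    have j: "j < length Ps" "v \<in> set (Ps!j)" using LeastI_ex[OF \<open>\<exists>j. _\<close>] j_def by auto
    have jmin: "\<And>i. i < length Ps \<Longrightarrow> v \<in> set (Ps!i) \<Longrightarrow> j \<le> i" using j_def by (simp add: Least_le)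
    define J where "J = (if j = 0 then 1 else j)"
    have J: "J < length Ps" "1 \<le> J" using j L2 J_def by auto
    obtain x0 where "Ps!0 = [x0]" using l0 by (cases "Ps!0") auto
    then have we0: "walk_edges (Ps!0) = {}" by simp
    have sub: "{e\<in>E. v \<in> e} \<subseteq> {e\<in>walk_edges (Ps!J). v \<in> e}"
    proof
      fix e assume e: "e \<in> {e\<in>E. v \<in> e}"
      then obtain i where i: "i < length Ps" "e \<in> walk_edges (Ps!i)" using UE by auto
      have vi: "v \<in> set (Ps!i)" using i e we_subset_set by fastforce
      have "i \<noteq> 0" using i we0 by (metis empty_iff)
      have "i = J"
      proof (cases "i = j")
        case True then show ?thesis using \<open>i \<noteq> 0\<close> J_def by simp
      next
        case False
        then have ji: "j < i" using jmin[OF i(1) vi] by simp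
        then have vW: "v \<in> ear_verts Ps i" using set_sub_ev[OF ji, of Ps] j(2) by blast
        show ?thesis
        proof (cases "i \<ge> 2")
          case True
          then have "open_ear (ear_verts Ps i) (Ps!i)" using oe i by simp
          then have "v = hd (Ps!i) \<or> v = last (Ps!i)" by (rule endpoints_open[OF _ vi vW])
          moreover have "i \<in> {2..<length Ps}" using True i by simp
          ultimately have "v \<in> (\<lambda>i. hd (Ps!i)) ` {2..<length Ps} \<union> (\<lambda>i. last (Ps!i)) ` {2..<length Ps}"
            by blast
          then show ?thesis using nR by blast
        next
          case False
          then have "i = 1" using \<open>i \<noteq> 0\<close> by simp
          then show ?thesis using ji J_def by simp
        qed
      qed
      then show "e \<in> {e\<in>walk_edges (Ps!J). v \<in> e}" using e i by simp
    qed
    have dd: "distinct (butlast (Ps!J)) \<and> distinct (tl (Ps!J))"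
    proof (cases "J = 1")
      case True then show ?thesis using closed_distinct[OF ce] by simp
    next
      case False
      then have "open_ear (ear_verts Ps J) (Ps!J)" using oe J by simp
      then have "distinct (Ps!J)" by (simp add: open_ear_def)
      then show ?thesis by (simp add: distinct_butlast distinct_tl)
    qed
    have "degree E v = card {e\<in>E. v \<in> e}" by (simp add: degree_def)
    also have "\<dots> \<le> card {e\<in>walk_edges (Ps!J). v \<in> e}"
      by (rule card_mono[OF _ sub]) (simp add: we_finite)
    also have "\<dots> \<le> 2" by (rule card_we_v) (use dd in auto)
    finally show False using v by simp
  qed
qed

lemma len_bound:
  assumes finT: "finite T" and l0: "length (Ps!0) = 1" "hd (Ps!0) \<in> T"
    and ei: "\<forall>i\<in>{1..<length Ps}. ear_int Ps i \<inter> T \<noteq> {}"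
  shows "length Ps \<le> card T"
proof -
  define f where "f i = (if i = 0 then hd (Ps!0) else (SOME t. t \<in> ear_int Ps i \<inter> T))" for i
  have fi: "f i \<in> ear_int Ps i \<inter> T" if "1 \<le> i" "i < length Ps" for i
  proof -
    have "ear_int Ps i \<inter> T \<noteq> {}" using ei that by simp
    then have "(SOME t. t \<in> ear_int Ps i \<inter> T) \<in> ear_int Ps i \<inter> T" by (metis ex_in_conv someI)
    then show ?thesis using that f_def by simp
  qed
  have f0: "f 0 \<in> set (Ps!0)" "f 0 \<in> T" using l0 f_def by (cases "Ps!0", auto)
  have fs: "f i \<in> set (Ps!i)" if "i < length Ps" for i
    using fi[of i] f0 that by (cases "i = 0") (auto simp: ear_int_def)
  have inj: "inj_on f {..<length Ps}"
  proof (rule inj_onI)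
    have key: "f i \<noteq> f j" if ij: "i < j" "j < length Ps" for i j
    proof -
      have "f i \<in> set (Ps!i)" using fs[of i] ij by simp
      then have "f i \<in> ear_verts Ps j" using set_sub_ev[OF ij(1), of Ps] by blast
      moreover have "f j \<notin> ear_verts Ps j" using fi[of j] ij by (auto simp: ear_int_def)
      ultimately show ?thesis by auto
    qed
    fix i j assume "i \<in> {..<length Ps}" "j \<in> {..<length Ps}" "f i = f j"
    then show "i = j" using key by (metis lessThan_iff linorder_neqE_nat)
  qed
  have "f ` {..<length Ps} \<subseteq> T"
  proof
    fix x assume "x \<in> f ` {..<length Ps}"
    then obtain i where i: "i < length Ps" "x = f i" by auto
    show "x \<in> T"
    proof (cases "i = 0")
      case True then show ?thesis using f0 i by simp
    next
      case False then show ?thesis using fi[of i] i by simp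
    qed
  qed
  then have "card {..<length Ps} \<le> card T" using card_inj_on_le[OF inj _ finT] by blast
  then show ?thesis by simp
qed

theorem lemma4p1:
  fixes VG VH :: "'a set" and EG EH :: "'a set set" and T :: "'a set"
  assumes "graph VG EG"
    and "T \<subseteq> VG"
    and "card T \<ge> 2"
    and "subgraph VH EH VG EG"
    and "two_node_connected VH EH"
    and "T \<subseteq> VH"
    and "\<forall>V' E'. subgraph V' E' VH EH \<and> E' \<subset> EH \<and> T \<subseteq> V' \<longrightarrow> \<not> two_node_connected V' E'"
  shows "\<exists>Ps. open_ear_decomposition VH EH Ps
           \<and> hd (Ps ! 0) \<in> T
           \<and> (\<forall>i\<in>{1..<length Ps}. ear_int Ps i \<inter> T \<noteq> {})
           \<and> card {v\<in>VH. degree EH v \<ge> 3} \<le> 2 * (card T - 2)"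
proof -
  have finVG: "finite VG" using assms(1) by (simp add: graph_def)
  have finT: "finite T" using finite_subset[OF assms(2) finVG] .
  have EV: "\<forall>e\<in>EH. e \<subseteq> VH" using assms(4) by (simp add: subgraph_def)
  have c2: "\<forall>e\<in>EH. card e = 2" using assms(1,4) by (auto simp: subgraph_def graph_def)
  have tnc: "two_node_connected VH EH" by fact
  have "T \<noteq> {}" using assms(3) by auto
  then obtain t0 where t0: "t0 \<in> T" by blast
  have "card (T - {t0}) \<ge> 1" using assms(3) t0 finT by simp
  then have "T - {t0} \<noteq> {}" by (metis card.empty not_one_le_zero)
  then obtain t1 where t1: "t1 \<in> T" "t1 \<noteq> t0" by blast
  obtain M where M: "t0 \<notin> set M" "t1 \<in> set M" "distinct M" "length M \<ge> 2"
      "walk_edges (t0 # M @ [t0]) \<subseteq> EH" "set M \<subseteq> VH"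
    using init_cycle[OF tnc c2 EV, of t0 t1] t0 t1 assms(6) by blast
  have "Inv VH EH T [[t0], t0 # M @ [t0]]"
    by (rule Inv_init[OF t0 t1(1) M(1-4) M(5) _ M(6)]) (use t0 assms(6) in blast)
  from Inv_loop[OF tnc finT assms(6) this] obtain Ps where
    I: "Inv VH EH T Ps" and TW: "T \<subseteq> ear_verts Ps (length Ps)" by blast
  define W where "W = ear_verts Ps (length Ps)"
  have sub: "\<forall>i<length Ps. walk_edges (Ps!i) \<subseteq> EH \<and> set (Ps!i) \<subseteq> VH" using I by (simp add: Inv_def)
  have WV: "W \<subseteq> VH" using sub unfolding W_def ear_verts_def by blast
  have UEsub: "UE Ps \<subseteq> EH" using sub unfolding UE_def by blast
  have tW: "two_node_connected W (UE Ps)" using I W_def by (simp add: Inv_def)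
  have "\<forall>e\<in>UE Ps. e \<subseteq> W" using UE_sub[of _ Ps] W_def by blast
  then have sg: "subgraph W (UE Ps) VH EH" using WV UEsub by (simp add: subgraph_def)
  have UEeq: "UE Ps = EH"
  proof (rule ccontr)
    assume "UE Ps \<noteq> EH"
    then have "UE Ps \<subset> EH" using UEsub by blast
    then show False using assms(7) sg TW W_def tW by blast
  qed
  have Weq: "W = VH"
  proof
    show "W \<subseteq> VH" by fact
    show "VH \<subseteq> W"
    proof
      fix v assume v: "v \<in> VH"
      have "card VH > 2" using tnc by (simp add: two_node_connected_def)
      then obtain u where u: "u \<in> VH" "u \<noteq> v" using third_vertex[of VH v v] by blast
      obtain z where "{v,z} \<in> EH" using nbr[OF tnc c2 v u(1) u(2)[symmetric]] by blast
      then have "{v,z} \<in> UE Ps" using UEeq by simp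
      then show "v \<in> W" using UE_sub W_def by blast
    qed
  qed
  have Iu1: "2 \<le> length Ps" using I unfolding Inv_def by (elim conjE) assumption
  have Iu2: "length (Ps!0) = 1" using I unfolding Inv_def by (elim conjE) assumption
  have Iu3: "hd (Ps!0) \<in> T" using I unfolding Inv_def by (elim conjE) assumption
  have Iu4: "closed_ear (ear_verts Ps 1) (Ps!1)" using I unfolding Inv_def by (elim conjE) assumption
  have Iu5: "\<forall>i\<in>{2..<length Ps}. open_ear (ear_verts Ps i) (Ps!i)" using I unfolding Inv_def by (elim conjE) assumption
  have Iu6: "\<forall>i<length Ps. \<forall>j<length Ps. i \<noteq> j \<longrightarrow> walk_edges (Ps!i) \<inter> walk_edges (Ps!j) = {}" using I unfolding Inv_def by (elim conjE) assumption
  have Iu7: "\<forall>i\<in>{1..<length Ps}. ear_int Ps i \<inter> T \<noteq> {}" using I unfolding Inv_def by (elim conjE) assumption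
  note Iu = Iu1 Iu2 Iu3 Iu4 Iu5 Iu6 Iu7
  have ed: "ear_decomposition VH EH Ps"
    unfolding ear_decomposition_def
  proof (intro conjI)
    show "Ps \<noteq> []" using Iu(1) by auto
    show "length (Ps!0) = 1" by (rule Iu(2))
    show "\<forall>i\<in>{1..<length Ps}. open_ear (ear_verts Ps i) (Ps ! i) \<or> closed_ear (ear_verts Ps i) (Ps ! i)"
    proof
      fix i assume i: "i \<in> {1..<length Ps}"
      show "open_ear (ear_verts Ps i) (Ps ! i) \<or> closed_ear (ear_verts Ps i) (Ps ! i)"
      proof (cases "i = 1")
        case True then show ?thesis using Iu(4) by simp
      next
        case False then show ?thesis using Iu(5) i by simp
      qed
    qed
    show "\<forall>i<length Ps. \<forall>j<length Ps. i \<noteq> j \<longrightarrow> walk_edges (Ps!i) \<inter> walk_edges (Ps!j) = {}" by (rule Iu(6))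
    show "(\<Union>i<length Ps. walk_edges (Ps ! i)) = EH" using UEeq by (simp add: UE_def)
    show "(\<Union>i<length Ps. set (Ps ! i)) = VH" using Weq by (simp add: W_def ear_verts_def)
  qed
  have oed: "open_ear_decomposition VH EH Ps"
    unfolding open_ear_decomposition_def using ed Iu(1) Iu(4) Iu(5) by blast
  have lenT: "length Ps \<le> card T" by (rule len_bound[OF finT Iu(2) Iu(3) Iu(7)])
  define I2 where "I2 = {2..<length Ps}"
  define S1 where "S1 = (\<lambda>i. hd (Ps!i)) ` I2"
  define S2 where "S2 = (\<lambda>i. last (Ps!i)) ` I2"
  have finI: "finite I2" by (simp add: I2_def)
  have f12: "finite (S1 \<union> S2)" using finI by (simp add: S1_def S2_def)
  have D3: "{v\<in>VH. degree EH v \<ge> 3} \<subseteq> S1 \<union> S2" using deg_bound[OF oed] by (simp add: S1_def S2_def I2_def)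
  have c1: "card S1 \<le> card I2" unfolding S1_def using finI by (rule card_image_le)
  have c2: "card S2 \<le> card I2" unfolding S2_def using finI by (rule card_image_le)
  have cI: "card I2 = length Ps - 2" by (simp add: I2_def)
  have "card {v\<in>VH. degree EH v \<ge> 3} \<le> card (S1 \<union> S2)" using card_mono[OF f12 D3] .
  also have "\<dots> \<le> card S1 + card S2" by (rule card_Un_le)
  finally have "card {v\<in>VH. degree EH v \<ge> 3} \<le> 2 * (card T - 2)" using c1 c2 cI lenT by linarith
  then show ?thesis using oed Iu(3) Iu(7) by blast
qed

end
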